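(* Let $(V,\|\cdot\|_V)$ be a normed vector space, $\mathcal{F},\Theta$ compact topological spaces with topologies generated by (pseudo-)metrics, and $E\colon V\times\mathcal{F}\times\Theta\to\mathbb{R}$ satisfying (EC) [for each $v$, $E(v,\cdot,\cdot)$ is continuous on $\mathcal{F}\times\Theta$] and (Lip) [for some $L\ge0$, each $E(\cdot,f,\theta)$ is $L$-Lipschitz on $V$]. Let $\bar v\in V$, $U\subseteq V$ convex, and $T_{\bar v}U:=\mathrm{cl}\{(v-\bar v)/t:t>0,v\in U\}$. Assume (Lin) for each $(f,\theta)$ the map $\Delta_{\bar v}E(\cdot,f,\theta)\colon V\to\mathbb{R}$, $v\mapsto E(\bar v+v,f,\theta)-E(\bar v,f,\theta)$, is linear; (DC) for each $h\in T_{\bar v}U$, the function $\theta\mapsto\sup_{f\in S(\bar v,\theta)}\Delta_{\bar v}E(h,f,\theta)$ is lower semi-continuous on $\Theta$. Then $\Psi\colon V\to C(\Theta)$, $\Psi(v)=(\sup_{f\in\mathcal{F}}E(v,f,\theta))_{\theta\in\Theta}$, is Hadamard directionally differentiable at $\bar v$ tangentially to $U$, with derivative $$D^H_{\bar v}\Psi\colon T_{\bar v}U\to C(\Theta),\quad h\mapsto\Big(\sup_{f\in S(\bar v,\theta)}\Delta_{\bar v}E(h,f,\theta)\Big)_{\theta\in\Theta},$$ i.e., for all $t_n\searrow0$ and $h_n\to h\in T_{\bar v}U$ with $\bar v+t_nh_n\in U$, $\|(\Psi(\bar v+t_nh_n)-\Psi(\bar v))/t_n-D^H_{\bar v}\P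si(h)\|_{C(\Theta)}\to0$.
   Context: $S(\bar v,\theta):=\{f\in\mathcal{F}:E(\bar v,f,\theta)=\sup_{f'\in\mathcal{F}}E(\bar v,f',\theta)\}$. $C(\Theta)$: bounded continuous real functions on $\Theta$ with uniform norm; $\mathrm{cl}$ denotes closure in $V$. *)

theory Defs
  imports "HOL-Analysis.Analysis"
begin

definition lsc_on :: "'a::topological_space set \<Rightarrow> ('a \<Rightarrow> real) \<Rightarrow> bool" where
  "lsc_on S g \<longleftrightarrow> (\<forall>x\<in>S. \<forall>a. a < g x \<longrightarrow> (\<forall>\<^sub>F y in at x within S. a < g y))"

definition supE :: "('v \<Rightarrow> 'f \<Rightarrow> 't \<Rightarrow> real) \<Rightarrow> 'f set \<Rightarrow> 'v \<Rightarrow> 't \<Rightarrow> real" where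
  "supE E Fs v \<theta> = (SUP f\<in>Fs. E v f \<theta>)"

definition argmaxE :: "('v \<Rightarrow> 'f \<Rightarrow> 't \<Rightarrow> real) \<Rightarrow> 'f set \<Rightarrow> 'v \<Rightarrow> 't \<Rightarrow> 'f set" where
  "argmaxE E Fs v \<theta> = {f\<in>Fs. E v f \<theta> = supE E Fs v \<theta>}"

definition DeltaE :: "('v::plus \<Rightarrow> 'f \<Rightarrow> 't \<Rightarrow> real) \<Rightarrow> 'v \<Rightarrow> 'v \<Rightarrow> 'f \<Rightarrow> 't \<Rightarrow> real" where
  "DeltaE E vb v f \<theta> = E (vb + v) f \<theta> - E vb f \<theta>"

definition tangent_cone :: "'v::real_normed_vector \<Rightarrow> 'v set \<Rightarrow> 'v set" where
  "tangent_cone vb U = closure {(1 / t) *\<^sub>R (v - vb) | t v. t > 0 \<and> v \<in> U}"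

definition DH :: "('v::real_normed_vector \<Rightarrow> 'f \<Rightarrow> 't \<Rightarrow> real) \<Rightarrow> 'f set \<Rightarrow> 'v \<Rightarrow> 'v \<Rightarrow> 't \<Rightarrow> real" where
  "DH E Fs vb h \<theta> = (SUP f\<in>argmaxE E Fs vb \<theta>. DeltaE E vb h f \<theta>)"

end

theory Submission
  imports Defs
begin

lemma equicont:
  fixes G :: "'a::metric_space \<times> 'b::metric_space \<Rightarrow> real"
  assumes "compact (A \<times> B)" "continuous_on (A \<times> B) G" "e > 0"
  shows "\<exists>d>0. \<forall>a\<in>A. \<forall>x\<in>B. \<forall>y\<in>B. dist x y < d \<longrightarrow> dist (G (a,x)) (G (a,y)) < e"
proof -
  have "uniformly_continuous_on (A\<times>B) G" using assms compact_uniformly_continuous by blast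
  then obtain d where "d>0" and d: "\<forall>x\<in>A\<times>B. \<forall>x'\<in>A\<times>B. dist x' x < d \<longrightarrow> dist (G x') (G x) < e"
    using assms(3) unfolding uniformly_continuous_on_def by blast
  show ?thesis
  proof (intro exI[of _ d] conjI ballI impI)
    fix a x y assume "a\<in>A" "x\<in>B" "y\<in>B" "dist x y < d"
    then have "dist (a,x) (a,y) < d" by (simp add: dist_Pair_Pair)
    then show "dist (G(a,x)) (G(a,y)) < e" using d[rule_format, of "(a,y)" "(a,x)"] \<open>a\<in>A\<close> \<open>x\<in>B\<close> \<open>y\<in>B\<close> by auto
  qed (rule \<open>d>0\<close>)
qed

lemma pos_lb:
  fixes g :: "'a::topological_space \<Rightarrow> real"
  assumes "compact K" "continuous_on K g" "\<forall>x\<in>K. 0 < g x"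
  shows "\<exists>\<delta>>0. \<forall>x\<in>K. \<delta> \<le> g x"
proof (cases "K = {}")
  case True then show ?thesis by (intro exI[of _ 1]) auto
next
  case False
  then obtain x where "x\<in>K" "\<forall>y\<in>K. g x \<le> g y" using continuous_attains_inf[OF assms(1) False assms(2)] by blast
  then show ?thesis using assms(3) by blast
qed

theorem mainTheorem17:
  fixes E :: "'v::real_normed_vector \<Rightarrow> 'f::metric_space \<Rightarrow> 't::metric_space \<Rightarrow> real"
    and Fs :: "'f set" and Th :: "'t set" and L :: real and vb :: 'v and U :: "'v set"
  assumes F_compact: "compact Fs" and F_nonempty: "Fs \<noteq> {}"
    and Th_compact: "compact Th"
    and EC: "\<And>v. continuous_on (Fs \<times> Th) (\<lambda>(f, \<theta>). E v f \<theta>)"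
    and Lip: "L \<ge> 0" "\<And>f \<theta>. f \<in> Fs \<Longrightarrow> \<theta> \<in> Th \<Longrightarrow> L-lipschitz_on UNIV (\<lambda>v. E v f \<theta>)"
    and U_convex: "convex U"
    and Lin: "\<And>f \<theta>. f \<in> Fs \<Longrightarrow> \<theta> \<in> Th \<Longrightarrow> linear (\<lambda>v. DeltaE E vb v f \<theta>)"
    and DC: "\<And>h. h \<in> tangent_cone vb U \<Longrightarrow>
               lsc_on Th (\<lambda>\<theta>. SUP f\<in>argmaxE E Fs vb \<theta>. DeltaE E vb h f \<theta>)"
  shows "(\<forall>v. continuous_on Th (supE E Fs v))
    \<and> (\<forall>h\<in>tangent_cone vb U. continuous_on Th (DH E Fs vb h))
    \<and> (\<forall>(t::nat \<Rightarrow> real) (hs::nat \<Rightarrow> 'v) h.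
          (\<forall>n. t n > 0) \<and> t \<longlonglongrightarrow> 0 \<and> hs \<longlonglongrightarrow> h \<and> h \<in> tangent_cone vb U
          \<and> (\<forall>n. vb + t n *\<^sub>R hs n \<in> U) \<longrightarrow>
          (\<forall>\<epsilon>>0. \<forall>\<^sub>F n in sequentially. \<forall>\<theta>\<in>Th.
             \<bar>(supE E Fs (vb + t n *\<^sub>R hs n) \<theta> - supE E Fs vb \<theta>) / t n - DH E Fs vb h \<theta>\<bar> \<le> \<epsilon>))"
proof -
  have cpt: "compact (Fs \<times> Th)" using F_compact Th_compact by (rule compact_Times)
  have ECp: "continuous_on (Fs\<times>Th) (\<lambda>p. E v (fst p) (snd p))" for v
  proof -
    have "(\<lambda>(f, \<theta>). E v f \<theta>) = (\<lambda>p. E v (fst p) (snd p))" by (auto simp: fun_eq_iff)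
    then show ?thesis using EC[of v] by simp
  qed
  have ECf: "continuous_on Fs (\<lambda>f. E v f \<theta>)" if "\<theta>\<in>Th" for v \<theta>
  proof -
    have "continuous_on Fs (\<lambda>f. (\<lambda>p. E v (fst p) (snd p)) (f,\<theta>))"
      by (rule continuous_on_compose2[OF ECp[of v]]) (auto intro!: continuous_intros simp: that)
    then show ?thesis by simp
  qed
  have bdd: "bdd_above ((\<lambda>f. E v f \<theta>) ` Fs)" if "\<theta>\<in>Th" for v \<theta>
    using compact_continuous_image[OF ECf[OF that] F_compact]
    by (intro bounded_imp_bdd_above compact_imp_bounded)
  have upper: "E v f \<theta> \<le> supE E Fs v \<theta>" if "f\<in>Fs" "\<theta>\<in>Th" for v f \<theta>
    unfolding supE_def by (rule cSUP_upper[OF that(1) bdd[OF that(2)]])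
  have suple: "supE E Fs v \<theta> \<le> c" if "\<And>f. f\<in>Fs \<Longrightarrow> E v f \<theta> \<le> c" for v \<theta> c
    unfolding supE_def using F_nonempty that by (rule cSUP_least)
  have Snonempty: "argmaxE E Fs vb \<theta> \<noteq> {}" if th: "\<theta>\<in>Th" for \<theta>
  proof -
    obtain f where f: "f\<in>Fs" "\<forall>y\<in>Fs. E vb y \<theta> \<le> E vb f \<theta>"
      using continuous_attains_sup[OF F_compact F_nonempty ECf[OF th]] by blast
    have "supE E Fs vb \<theta> \<le> E vb f \<theta>" using f by (intro suple) auto
    then have "E vb f \<theta> = supE E Fs vb \<theta>" using upper[OF f(1) th, of vb] by linarith
    then show ?thesis using f unfolding argmaxE_def by auto
  qed
  have Dbound: "\<bar>DeltaE E vb h f \<theta>\<bar> \<le> L * norm h" if "f\<in>Fs" "\<theta>\<in>Th" for h f \<theta>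
    using lipschitz_onD[OF Lip(2)[OF that], of "vb+h" vb]
    by (simp add: DeltaE_def dist_real_def dist_norm)
  have Dlip: "\<bar>DeltaE E vb x f \<theta> - DeltaE E vb y f \<theta>\<bar> \<le> L * norm (x - y)" if "f\<in>Fs" "\<theta>\<in>Th" for x y f \<theta>
    using lipschitz_onD[OF Lip(2)[OF that], of "vb+x" "vb+y"]
    by (simp add: DeltaE_def dist_real_def dist_norm)
  have DHupper: "DeltaE E vb h f \<theta> \<le> DH E Fs vb h \<theta>" if "f\<in>argmaxE E Fs vb \<theta>" "\<theta>\<in>Th" for h f \<theta>
    unfolding DH_def
  proof (rule cSUP_upper[OF that(1)])
    show "bdd_above ((\<lambda>f. DeltaE E vb h f \<theta>) ` argmaxE E Fs vb \<theta>)"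
      using Dbound that(2) by (intro bdd_aboveI2[of _ _ "L * norm h"]) (auto simp: argmaxE_def abs_le_iff)
  qed
  have DHle: "DH E Fs vb h \<theta> \<le> c" if "\<theta>\<in>Th" "\<And>f. f\<in>argmaxE E Fs vb \<theta> \<Longrightarrow> DeltaE E vb h f \<theta> \<le> c" for h \<theta> c
    unfolding DH_def using Snonempty[OF that(1)] that(2) by (rule cSUP_least)
  have DHlow: "- (L*norm h) \<le> DH E Fs vb h \<theta>" if th: "\<theta>\<in>Th" for h \<theta>
  proof -
    obtain f where f: "f\<in>argmaxE E Fs vb \<theta>" using Snonempty[OF th] by blast
    then have "f\<in>Fs" by (simp add: argmaxE_def)
    then show ?thesis using DHupper[OF f th, of h] Dbound[OF _ th, of f h] by (auto simp: abs_le_iff)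
  qed
  have DHup: "DH E Fs vb h \<theta> \<le> L*norm h" if "\<theta>\<in>Th" for h \<theta>
    using that by (rule DHle) (use Dbound that in \<open>auto simp: argmaxE_def abs_le_iff\<close>)
  have Dcont: "continuous_on (Fs\<times>Th) (\<lambda>p. DeltaE E vb h (fst p) (snd p))" for h
    unfolding DeltaE_def by (intro continuous_on_diff ECp)
  have part1: "\<forall>v. continuous_on Th (supE E Fs v)"
  proof
    fix v
    show "continuous_on Th (supE E Fs v)"
      unfolding continuous_on_iff
    proof (intro ballI allI impI)
      fix \<theta>0 and e :: real assume \<theta>0: "\<theta>0\<in>Th" and e: "e>0"
      obtain d where d: "d>0" "\<forall>f\<in>Fs. \<forall>x\<in>Th. \<forall>y\<in>Th. dist x y < d \<longrightarrow> dist (E v f x) (E v f y) < e/2"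
        using equicont[OF cpt ECp[of v], of "e/2"] e by auto
      show "\<exists>d>0. \<forall>\<theta>\<in>Th. dist \<theta> \<theta>0 < d \<longrightarrow> dist (supE E Fs v \<theta>) (supE E Fs v \<theta>0) < e"
      proof (intro exI[of _ d] conjI ballI impI)
        fix \<theta> assume \<theta>: "\<theta>\<in>Th" "dist \<theta> \<theta>0 < d"
        have c: "\<bar>E v f \<theta> - E v f \<theta>0\<bar> < e/2" if "f\<in>Fs" for f
          using d(2) that \<theta> \<theta>0 by (auto simp: dist_real_def)
        have 1: "supE E Fs v \<theta> \<le> supE E Fs v \<theta>0 + e/2"
        proof (rule suple)
          fix f assume f: "f\<in>Fs"
          show "E v f \<theta> \<le> supE E Fs v \<theta>0 + e/2" using c[OF f] upper[OF f \<theta>0, of v] abs_less_iff[of "E v f \<theta> - E v f \<theta>0" "e/2"] by linarith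
        qed
        have 2: "supE E Fs v \<theta>0 \<le> supE E Fs v \<theta> + e/2"
        proof (rule suple)
          fix f assume f: "f\<in>Fs"
          show "E v f \<theta>0 \<le> supE E Fs v \<theta> + e/2" using c[OF f] upper[OF f \<theta>(1), of v] abs_less_iff[of "E v f \<theta> - E v f \<theta>0" "e/2"] by linarith
        qed
        show "dist (supE E Fs v \<theta>) (supE E Fs v \<theta>0) < e"
          using 1 2 e by (simp add: dist_real_def abs_less_iff)
      qed (rule d(1))
    qed
  qed
  have gcont: "continuous_on (Fs\<times>Th) (\<lambda>p. supE E Fs vb (snd p) - E vb (fst p) (snd p))"
  proof (rule continuous_on_diff[OF _ ECp])
    show "continuous_on (Fs\<times>Th) (\<lambda>p. supE E Fs vb (snd p))"
      by (rule continuous_on_compose2[OF part1[rule_format, of vb] continuous_on_snd]) auto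
  qed
  have g0: "0 \<le> supE E Fs vb \<theta> - E vb f \<theta>" if "f\<in>Fs" "\<theta>\<in>Th" for f \<theta>
    using upper[OF that] by simp
  have gS: "f\<in>argmaxE E Fs vb \<theta>" if "f\<in>Fs" "supE E Fs vb \<theta> - E vb f \<theta> \<le> 0" "\<theta>\<in>Th" for f \<theta>
    using that upper[OF that(1,3), of vb] unfolding argmaxE_def by auto
  have part2: "\<forall>h\<in>tangent_cone vb U. continuous_on Th (DH E Fs vb h)"
  proof
    fix h assume h: "h \<in> tangent_cone vb U"
    have lsc: "lsc_on Th (DH E Fs vb h)"
    proof -
      have "(\<lambda>\<theta>. DH E Fs vb h \<theta>) = (\<lambda>\<theta>. SUP f\<in>argmaxE E Fs vb \<theta>. DeltaE E vb h f \<theta>)"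
        by (simp add: DH_def fun_eq_iff)
      then show ?thesis using DC[OF h] by simp
    qed
    show "continuous_on Th (DH E Fs vb h)"
      unfolding continuous_on_def
    proof (intro ballI)
      fix \<theta>0 assume \<theta>0: "\<theta>0 \<in> Th"
      show "(DH E Fs vb h \<longlongrightarrow> DH E Fs vb h \<theta>0) (at \<theta>0 within Th)"
        unfolding order_tendsto_iff
      proof (intro conjI allI impI)
        fix a assume "a < DH E Fs vb h \<theta>0"
        then show "\<forall>\<^sub>F \<theta> in at \<theta>0 within Th. a < DH E Fs vb h \<theta>"
          using lsc \<theta>0 unfolding lsc_on_def by blast
      next
        fix a assume a: "DH E Fs vb h \<theta>0 < a"
        define a' where "a' = (a + DH E Fs vb h \<theta>0) / 2"
        define K where "K = {f\<in>Fs. (\<lambda>f. a') f \<le> DeltaE E vb h f \<theta>0}"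
        have cD0: "continuous_on Fs (\<lambda>f. DeltaE E vb h f \<theta>0)"
          unfolding DeltaE_def using \<theta>0 by (intro continuous_on_diff ECf)
        have "closed K" unfolding K_def
          by (rule continuous_on_closed_Collect_le) (auto intro: cD0 compact_imp_closed F_compact)
        moreover have "Fs \<inter> K = K" by (auto simp: K_def)
        ultimately have cK: "compact K"
          using compact_Int_closed[OF F_compact] by metis
        have cg: "continuous_on K (\<lambda>f. supE E Fs vb \<theta>0 - E vb f \<theta>0)"
          by (rule continuous_on_subset[of Fs]) (use \<theta>0 in \<open>auto intro!: continuous_intros ECf simp: K_def\<close>)
        have "\<forall>f\<in>K. 0 < supE E Fs vb \<theta>0 - E vb f \<theta>0"
        proof
          fix f assume f: "f\<in>K"
          show "0 < supE E Fs vb \<theta>0 - E vb f \<theta>0"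
          proof (rule ccontr)
            assume "\<not> ?thesis"
            then have "f \<in> argmaxE E Fs vb \<theta>0" using f \<theta>0 gS by (auto simp: K_def)
            then have "DeltaE E vb h f \<theta>0 \<le> DH E Fs vb h \<theta>0" using DHupper \<theta>0 by blast
            then show False using f a by (auto simp: K_def a'_def)
          qed
        qed
        then obtain \<delta> where \<delta>: "\<delta>>0" "\<forall>f\<in>K. \<delta> \<le> supE E Fs vb \<theta>0 - E vb f \<theta>0"
          using pos_lb[OF cK cg] by blast
        obtain d1 where d1: "d1>0" "\<forall>f\<in>Fs. \<forall>x\<in>Th. \<forall>y\<in>Th. dist x y < d1 \<longrightarrow>
            dist (DeltaE E vb h f x) (DeltaE E vb h f y) < (a - a')/2"
          using equicont[OF cpt Dcont[of h], of "(a-a')/2"] a by (auto simp: a'_def)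
        obtain d2 where d2: "d2>0" "\<forall>f\<in>Fs. \<forall>x\<in>Th. \<forall>y\<in>Th. dist x y < d2 \<longrightarrow>
            dist (supE E Fs vb x - E vb f x) (supE E Fs vb y - E vb f y) < \<delta>"
          using equicont[OF cpt gcont, of \<delta>] \<delta> by auto
        show "\<forall>\<^sub>F \<theta> in at \<theta>0 within Th. DH E Fs vb h \<theta> < a"
          unfolding eventually_at
        proof (intro exI[of _ "min d1 d2"] conjI ballI impI)
          fix \<theta> assume \<theta>in: "\<theta>\<in>Th" and \<theta>: "\<theta> \<noteq> \<theta>0 \<and> dist \<theta> \<theta>0 < min d1 d2"
          have "DH E Fs vb h \<theta> \<le> a' + (a - a')/2"
          proof (rule DHle)
            show "\<theta>\<in>Th" using \<theta>in by blast
            fix f assume f: "f \<in> argmaxE E Fs vb \<theta>"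
            then have fF: "f\<in>Fs" and fe: "E vb f \<theta> = supE E Fs vb \<theta>" by (auto simp: argmaxE_def)
            have "supE E Fs vb \<theta>0 - E vb f \<theta>0 < \<delta>"
              using d2(2)[rule_format, OF fF, of \<theta> \<theta>0] \<theta> \<theta>in \<theta>0 fe by (auto simp: dist_real_def abs_less_iff)
            then have "f \<notin> K" using \<delta>(2) by (metis leD)
            then have "DeltaE E vb h f \<theta>0 < a'" using fF by (auto simp: K_def)
            moreover have "\<bar>DeltaE E vb h f \<theta> - DeltaE E vb h f \<theta>0\<bar> < (a-a')/2"
              using d1(2)[rule_format, OF fF, of \<theta> \<theta>0] \<theta> \<theta>in \<theta>0 by (auto simp: dist_real_def)
            ultimately show "DeltaE E vb h f \<theta> \<le> a' + (a - a')/2" unfolding abs_less_iff by linarith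
          qed
          then show "DH E Fs vb h \<theta> < a" using a unfolding a'_def by (simp add: field_simps)
        qed (use d1 d2 in auto)
      qed
    qed
  qed
  have part3: "\<forall>(t::nat \<Rightarrow> real) (hs::nat \<Rightarrow> 'v) h.
          (\<forall>n. t n > 0) \<and> t \<longlonglongrightarrow> 0 \<and> hs \<longlonglongrightarrow> h \<and> h \<in> tangent_cone vb U
          \<and> (\<forall>n. vb + t n *\<^sub>R hs n \<in> U) \<longrightarrow>
          (\<forall>\<epsilon>>0. \<forall>\<^sub>F n in sequentially. \<forall>\<theta>\<in>Th.
             \<bar>(supE E Fs (vb + t n *\<^sub>R hs n) \<theta> - supE E Fs vb \<theta>) / t n - DH E Fs vb h \<theta>\<bar> \<le> \<epsilon>)"
  proof (intro allI impI)
    fix t :: "nat \<Rightarrow> real" and hs :: "nat \<Rightarrow> 'v" and h :: 'v and \<epsilon> :: real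
    assume A: "(\<forall>n. t n > 0) \<and> t \<longlonglongrightarrow> 0 \<and> hs \<longlonglongrightarrow> h \<and> h \<in> tangent_cone vb U
          \<and> (\<forall>n. vb + t n *\<^sub>R hs n \<in> U)" and \<epsilon>: "\<epsilon> > 0"
    have tpos: "\<And>n. t n > 0" and t0: "t \<longlonglongrightarrow> 0" and hsh: "hs \<longlonglongrightarrow> h" and h: "h \<in> tangent_cone vb U"
      using A by auto
    have Dc: "continuous_on Th (DH E Fs vb h)" using part2 h by blast
    define e where "e = \<epsilon>/2"
    have e: "e > 0" using \<epsilon> by (simp add: e_def)
    define K where "K = {p\<in>Fs\<times>Th. (\<lambda>p. e) p \<le> DeltaE E vb h (fst p) (snd p) - DH E Fs vb h (snd p)}"
    have cphi: "continuous_on (Fs\<times>Th) (\<lambda>p. DeltaE E vb h (fst p) (snd p) - DH E Fs vb h (snd p))"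
    proof (rule continuous_on_diff[OF Dcont])
      show "continuous_on (Fs\<times>Th) (\<lambda>p. DH E Fs vb h (snd p))"
        by (rule continuous_on_compose2[OF Dc continuous_on_snd]) auto
    qed
    have "closed K" unfolding K_def
      by (rule continuous_on_closed_Collect_le) (auto intro: cphi compact_imp_closed cpt)
    moreover have "(Fs \<times> Th) \<inter> K = K" by (auto simp: K_def)
    ultimately have cK: "compact K"
      using compact_Int_closed[OF cpt] by metis
    have "\<forall>p\<in>K. 0 < supE E Fs vb (snd p) - E vb (fst p) (snd p)"
    proof
      fix p assume p: "p\<in>K"
      then have pF: "fst p \<in> Fs" "snd p \<in> Th" by (auto simp: K_def mem_Times_iff)
      show "0 < supE E Fs vb (snd p) - E vb (fst p) (snd p)"
      proof (rule ccontr)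
        assume "\<not> ?thesis"
        then have "fst p \<in> argmaxE E Fs vb (snd p)" using pF gS by auto
        then have "DeltaE E vb h (fst p) (snd p) \<le> DH E Fs vb h (snd p)" using DHupper pF by blast
        then show False using p e by (auto simp: K_def)
      qed
    qed
    then obtain \<delta> where \<delta>: "\<delta>>0" "\<forall>p\<in>K. \<delta> \<le> supE E Fs vb (snd p) - E vb (fst p) (snd p)"
      using pos_lb[OF cK continuous_on_subset[OF gcont]] by (auto simp: K_def)
    have "(\<lambda>n. L * norm (hs n - h)) \<longlonglongrightarrow> L * norm (h - h)"
      by (intro tendsto_intros hsh)
    then have ev1: "\<forall>\<^sub>F n in sequentially. L * norm (hs n - h) < e"
      using e by (intro order_tendstoD(2)) auto
    have "(\<lambda>n. t n * (L * (norm (hs n) + norm h))) \<longlonglongrightarrow> 0 * (L * (norm h + norm h))"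
      by (intro tendsto_intros t0 hsh)
    then have ev2: "\<forall>\<^sub>F n in sequentially. t n * (L * (norm (hs n) + norm h)) < \<delta>"
      using \<delta> by (intro order_tendstoD(2)) auto
    show "\<forall>\<^sub>F n in sequentially. \<forall>\<theta>\<in>Th.
             \<bar>(supE E Fs (vb + t n *\<^sub>R hs n) \<theta> - supE E Fs vb \<theta>) / t n - DH E Fs vb h \<theta>\<bar> \<le> \<epsilon>"
      using ev1 ev2
    proof eventually_elim
      case (elim n)
      show ?case
      proof
        fix \<theta> assume \<theta>: "\<theta>\<in>Th"
        define tn where "tn = t n"
        have tn: "tn > 0" using tpos by (simp add: tn_def)
        define vn where "vn = vb + tn *\<^sub>R hs n"
        have Evn: "E vn f \<theta> = E vb f \<theta> + tn * DeltaE E vb (hs n) f \<theta>" if "f\<in>Fs" for f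
        proof -
          have "DeltaE E vb (tn *\<^sub>R hs n) f \<theta> = tn * DeltaE E vb (hs n) f \<theta>"
            using linear_scale[OF Lin[OF that \<theta>], of tn "hs n"] by simp
          then show ?thesis by (simp add: DeltaE_def vn_def)
        qed
        have Dh: "DeltaE E vb (hs n) f \<theta> \<ge> DeltaE E vb h f \<theta> - e"
             "DeltaE E vb (hs n) f \<theta> \<le> DeltaE E vb h f \<theta> + e" if "f\<in>Fs" for f
          using Dlip[OF that \<theta>, of "hs n" h] elim(1) unfolding abs_le_iff by linarith+
        have low: "supE E Fs vb \<theta> + tn * (DH E Fs vb h \<theta> - e) \<le> supE E Fs vn \<theta>"
        proof -
          have "DH E Fs vb h \<theta> \<le> (supE E Fs vn \<theta> - supE E Fs vb \<theta>) / tn + e"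
          proof (rule DHle[OF \<theta>])
            fix f assume f: "f\<in>argmaxE E Fs vb \<theta>"
            then have fF: "f\<in>Fs" and fe: "E vb f \<theta> = supE E Fs vb \<theta>" by (auto simp: argmaxE_def)
            have "E vn f \<theta> \<le> supE E Fs vn \<theta>" by (rule upper[OF fF \<theta>])
            then have "tn * DeltaE E vb (hs n) f \<theta> \<le> supE E Fs vn \<theta> - supE E Fs vb \<theta>"
              using Evn[OF fF] fe by simp
            then have "DeltaE E vb (hs n) f \<theta> \<le> (supE E Fs vn \<theta> - supE E Fs vb \<theta>) / tn"
              using tn by (simp add: pos_le_divide_eq mult.commute)
            then show "DeltaE E vb h f \<theta> \<le> (supE E Fs vn \<theta> - supE E Fs vb \<theta>) / tn + e"
              using Dh(1)[OF fF] by simp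
          qed
          then have "DH E Fs vb h \<theta> - e \<le> (supE E Fs vn \<theta> - supE E Fs vb \<theta>) / tn" by linarith
          then have "tn * (DH E Fs vb h \<theta> - e) \<le> tn * ((supE E Fs vn \<theta> - supE E Fs vb \<theta>) / tn)"
            using tn by (intro mult_left_mono) auto
          then have "tn * (DH E Fs vb h \<theta> - e) \<le> supE E Fs vn \<theta> - supE E Fs vb \<theta>"
            using tn by simp
          then show ?thesis by simp
        qed
        have up: "supE E Fs vn \<theta> \<le> supE E Fs vb \<theta> + tn * (DH E Fs vb h \<theta> + \<epsilon>)"
        proof (rule suple)
          fix f assume fF: "f\<in>Fs"
          show "E vn f \<theta> \<le> supE E Fs vb \<theta> + tn * (DH E Fs vb h \<theta> + \<epsilon>)"
          proof (cases "(f,\<theta>) \<in> K")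
            case True
            then have g: "E vb f \<theta> \<le> supE E Fs vb \<theta> - \<delta>" using \<delta>(2)[rule_format, OF True] by simp
            have "DeltaE E vb (hs n) f \<theta> \<le> L * norm (hs n)" using Dbound[OF fF \<theta>, of "hs n"] by simp
            then have "tn * DeltaE E vb (hs n) f \<theta> \<le> tn * (L * norm (hs n))"
              using tn by (intro mult_left_mono) auto
            moreover have "tn * (L * (norm (hs n) + norm h)) < \<delta>" using elim(2) by (simp add: tn_def)
            moreover have "tn * (- (L * norm h)) \<le> tn * (DH E Fs vb h \<theta> + \<epsilon>)"
              using DHlow[OF \<theta>, of h] tn \<epsilon> by (intro mult_left_mono) auto
            ultimately show ?thesis using Evn[OF fF] g by (simp add: algebra_simps)
          next
            case False
            then have "DeltaE E vb h f \<theta> < DH E Fs vb h \<theta> + e" using fF \<theta> by (auto simp: K_def)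
            then have "DeltaE E vb (hs n) f \<theta> \<le> DH E Fs vb h \<theta> + \<epsilon>" using Dh(2)[OF fF] by (simp add: e_def)
            then have "tn * DeltaE E vb (hs n) f \<theta> \<le> tn * (DH E Fs vb h \<theta> + \<epsilon>)"
              using tn by (intro mult_left_mono) auto
            then show ?thesis using Evn[OF fF] upper[OF fF \<theta>, of vb] by simp
          qed
        qed
        have q1: "(supE E Fs vn \<theta> - supE E Fs vb \<theta>) / tn \<le> DH E Fs vb h \<theta> + \<epsilon>"
          using up tn by (simp add: pos_divide_le_eq mult.commute)
        have q2: "DH E Fs vb h \<theta> - e \<le> (supE E Fs vn \<theta> - supE E Fs vb \<theta>) / tn"
          using low tn by (simp add: pos_le_divide_eq mult.commute)
        show "\<bar>(supE E Fs (vb + t n *\<^sub>R hs n) \<theta> - supE E Fs vb \<theta>) / t n - DH E Fs vb h \<theta>\<bar> \<le> \<epsilon>"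
          using q1 q2 e unfolding vn_def tn_def abs_le_iff e_def by linarith
      qed
    qed
  qed
  show ?thesis using part1 part2 part3 by blast
qed

end
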